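(* Let $\alpha>0$, $\lambda\in\mathbb C$, and $\gamma=1/\sqrt{1+\alpha}$. The equation $$(\lambda^2+\lambda)\varphi+\Big((2\lambda+2)y+\frac{2\alpha}{\sqrt{1+\alpha}+y}\Big)\varphi'+(y^2-1)\varphi''=0 \tag{E1}$$ has a nontrivial solution $\varphi\in C^\infty[-1,1]$ if and only if the equation $$(\lambda^2-\lambda)\psi+\big(2\lambda y'+2\sqrt{1+\alpha}\big)\psi'+(y'^2-1)\psi''=0 \tag{E2}$$ has a nontrivial solution $\psi\in C^\infty[-1,1]$. Moreover, solutions correspond via $$\psi(y')=\Big(\frac{1-\gamma y'}{\sqrt{1-\gamma^2}}\Big)^{-\lambda}\varphi\Big(\frac{y'-\gamma}{1-\gamma y'}\Big).$$
   Context: (E1) is the eigenvalue equation of the linearization at the blow-up profile $U_{\alpha,\infty,\kappa}(s,y)=\alpha s-\alpha\log(\sqrt{1+\alpha}+y)+\kappa$ of the self-similar form of $u_{tt}-u_{xx}=(u_x)^2$; (E2) is the eigenvalue equation of the linearization at its Lorentz transform, which is independent of $y'$. *)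

theory Defs
  imports "HOL-Analysis.Analysis"
begin

abbreviation I11 :: "real set" where "I11 \<equiv> {-1..1}"

definition deriv_chain :: "(real \<Rightarrow> complex) \<Rightarrow> (nat \<Rightarrow> real \<Rightarrow> complex) \<Rightarrow> bool" where
  "deriv_chain f D \<longleftrightarrow> (\<forall>x\<in>I11. D 0 x = f x) \<and>
     (\<forall>k. \<forall>x\<in>I11. (D k has_vector_derivative D (Suc k) x) (at x within I11))"

definition smooth_I11 :: "(real \<Rightarrow> complex) \<Rightarrow> bool" where
  "smooth_I11 f \<longleftrightarrow> (\<exists>D. deriv_chain f D)"

definition solves_E1 :: "real \<Rightarrow> complex \<Rightarrow> (real \<Rightarrow> complex) \<Rightarrow> bool" where
  "solves_E1 \<alpha> lam \<phi> \<longleftrightarrow> (\<exists>D. deriv_chain \<phi> D \<and>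
     (\<forall>y\<in>I11. (lam^2 + lam) * \<phi> y
        + ((2*lam + 2) * of_real y + of_real (2*\<alpha> / (sqrt (1+\<alpha>) + y))) * D 1 y
        + of_real (y^2 - 1) * D 2 y = 0))"

definition solves_E2 :: "real \<Rightarrow> complex \<Rightarrow> (real \<Rightarrow> complex) \<Rightarrow> bool" where
  "solves_E2 \<alpha> lam \<psi> \<longleftrightarrow> (\<exists>D. deriv_chain \<psi> D \<and>
     (\<forall>y\<in>I11. (lam^2 - lam) * \<psi> y
        + (2*lam * of_real y + of_real (2 * sqrt (1+\<alpha>))) * D 1 y
        + of_real (y^2 - 1) * D 2 y = 0))"

definition nontrivial_I11 :: "(real \<Rightarrow> complex) \<Rightarrow> bool" where
  "nontrivial_I11 f \<longleftrightarrow> (\<exists>x\<in>I11. f x \<noteq> 0)"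

text \<open>The Lorentz-type transform from solutions of (E1) to solutions of (E2),
  with \<gamma> = 1/sqrt(1+\<alpha>). The base is a positive real on [-1,1].\<close>
definition lorentz :: "real \<Rightarrow> complex \<Rightarrow> (real \<Rightarrow> complex) \<Rightarrow> real \<Rightarrow> complex" where
  "lorentz \<alpha> lam \<phi> y' =
     (let \<gamma> = 1 / sqrt (1+\<alpha>) in
       (complex_of_real ((1 - \<gamma>*y') / sqrt (1 - \<gamma>^2))) powr (-lam)
       * \<phi> ((y' - \<gamma>) / (1 - \<gamma>*y')))"

end

theory Submission
  imports Defs
begin

definition Cn :: "nat \<Rightarrow> (real \<Rightarrow> 'a::real_normed_vector) \<Rightarrow> bool" where
  "Cn n f \<longleftrightarrow> (\<exists>D. D 0 = f \<and> (\<forall>k<n. \<forall>x\<in>I11. (D k has_vector_derivative D (Suc k) x) (at x within I11)))"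

definition Sm :: "(real \<Rightarrow> 'a::real_normed_vector) \<Rightarrow> bool" where
  "Sm f \<longleftrightarrow> (\<exists>D. D 0 = f \<and> (\<forall>k. \<forall>x\<in>I11. (D k has_vector_derivative D (Suc k) x) (at x within I11)))"

lemma Cn_0[simp]: "Cn 0 f"
  unfolding Cn_def by auto

lemma Cn_Suc: "Cn (Suc n) f \<longleftrightarrow> (\<exists>f'. (\<forall>x\<in>I11. (f has_vector_derivative f' x) (at x within I11)) \<and> Cn n f')"
proof
  assume "Cn (Suc n) f"
  then obtain D where D: "D 0 = f" "\<forall>k<Suc n. \<forall>x\<in>I11. (D k has_vector_derivative D (Suc k) x) (at x within I11)"
    unfolding Cn_def by blast
  show "\<exists>f'. (\<forall>x\<in>I11. (f has_vector_derivative f' x) (at x within I11)) \<and> Cn n f'"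
    apply (rule exI[of _ "D 1"])
    using D unfolding Cn_def
    apply (intro conjI)
     apply force
    apply (rule exI[of _ "\<lambda>k. D (Suc k)"])
    by auto
next
  assume "\<exists>f'. (\<forall>x\<in>I11. (f has_vector_derivative f' x) (at x within I11)) \<and> Cn n f'"
  then obtain f' D where f': "\<forall>x\<in>I11. (f has_vector_derivative f' x) (at x within I11)"
    and D: "D 0 = f'" "\<forall>k<n. \<forall>x\<in>I11. (D k has_vector_derivative D (Suc k) x) (at x within I11)"
    unfolding Cn_def by blast
  show "Cn (Suc n) f"
    unfolding Cn_def
    apply (rule exI[of _ "\<lambda>k. case k of 0 \<Rightarrow> f | Suc j \<Rightarrow> D j"])
    using f' D by (auto simp: less_Suc_eq_0_disj)
qed

lemma Cn_mono: "Cn (Suc n) f \<Longrightarrow> Cn n f"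
  unfolding Cn_def by force

lemma Sm_Cn: "Sm f \<Longrightarrow> Cn n f"
  unfolding Sm_def Cn_def by blast

lemma Sm_D: "Sm f \<Longrightarrow> \<exists>f'. (\<forall>x\<in>I11. (f has_vector_derivative f' x) (at x within I11)) \<and> Sm f'"
  unfolding Sm_def
  apply clarify
  subgoal for D
    apply (rule exI[of _ "D 1"])
    apply (intro conjI)
     apply force
    apply (rule exI[of _ "\<lambda>k. D (Suc k)"])
    by auto
  done

lemma Cn_add: "Cn n f \<Longrightarrow> Cn n g \<Longrightarrow> Cn n (\<lambda>x. f x + g x)"
  unfolding Cn_def
  apply clarify
  subgoal for D E
    apply (rule exI[of _ "\<lambda>k x. D k x + E k x"])
    by (auto intro: has_vector_derivative_add)
  done

lemma Cn_mult:
  fixes f g :: "real \<Rightarrow> 'a::real_normed_algebra"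
  shows "Cn n f \<Longrightarrow> Cn n g \<Longrightarrow> Cn n (\<lambda>x. f x * g x)"
proof (induction n arbitrary: f g)
  case 0
  then show ?case by simp
next
  case (Suc n)
  obtain f' where f': "\<forall>x\<in>I11. (f has_vector_derivative f' x) (at x within I11)" "Cn n f'"
    using Suc.prems(1) Cn_Suc by blast
  obtain g' where g': "\<forall>x\<in>I11. (g has_vector_derivative g' x) (at x within I11)" "Cn n g'"
    using Suc.prems(2) Cn_Suc by blast
  have "Cn n (\<lambda>x. f x * g' x + f' x * g x)"
    using Cn_mono[OF Suc.prems(1)] Cn_mono[OF Suc.prems(2)] f'(2) g'(2)
    by (intro Cn_add Suc.IH)
  moreover have "\<forall>x\<in>I11. ((\<lambda>x. f x * g x) has_vector_derivative (f x * g' x + f' x * g x)) (at x within I11)"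
    using f' g' by (auto intro: has_vector_derivative_mult)
  ultimately show ?case unfolding Cn_Suc
    by (intro exI[of _ "\<lambda>x. f x * g' x + f' x * g x"] conjI) auto
qed

lemma Cn_of_real:
  fixes g :: "real \<Rightarrow> real"
  shows "Cn n g \<Longrightarrow> Cn n (\<lambda>x. complex_of_real (g x))"
  unfolding Cn_def
  apply clarify
  subgoal for D
    apply (rule exI[of _ "\<lambda>k x. complex_of_real (D k x)"])
    by (auto intro!: has_vector_derivative_of_real simp: has_real_derivative_iff_has_vector_derivative)
  done

lemma Cn_comp:
  fixes \<phi> :: "real \<Rightarrow> complex" and g :: "real \<Rightarrow> real"
  assumes "Sm g" "g ` I11 \<subseteq> I11"
  shows "Sm \<phi> \<Longrightarrow> Cn n (\<lambda>x. \<phi> (g x))"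
proof (induction n arbitrary: \<phi>)
  case 0
  then show ?case by simp
next
  case (Suc n)
  obtain \<phi>' where f': "\<forall>x\<in>I11. (\<phi> has_vector_derivative \<phi>' x) (at x within I11)" "Sm \<phi>'"
    using Suc.prems Sm_D by blast
  obtain g' where g': "\<forall>x\<in>I11. (g has_vector_derivative g' x) (at x within I11)" "Sm g'"
    using assms(1) Sm_D by blast
  have c1: "Cn n (\<lambda>x. complex_of_real (g' x) * \<phi>' (g x))"
    by (intro Cn_mult Suc.IH Cn_of_real Sm_Cn f' g')
  moreover have c2: "\<forall>x\<in>I11. ((\<lambda>x. \<phi> (g x)) has_vector_derivative (complex_of_real (g' x) * \<phi>' (g x))) (at x within I11)"
  proof
    fix x :: real assume x: "x \<in> I11"
    have gx: "g x \<in> I11" using assms(2) x by blast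
    have "(\<phi> has_vector_derivative \<phi>' (g x)) (at (g x) within g ` I11)"
      by (rule has_vector_derivative_within_subset[OF f'(1)[rule_format, OF gx] assms(2)])
    from vector_diff_chain_within[OF g'(1)[rule_format, OF x] this]
    show "((\<lambda>x. \<phi> (g x)) has_vector_derivative (complex_of_real (g' x) * \<phi>' (g x))) (at x within I11)"
      by (simp add: o_def scaleR_conv_of_real)
  qed
  show ?case unfolding Cn_Suc
    by (rule exI[of _ "\<lambda>x. complex_of_real (g' x) * \<phi>' (g x)"]) (use c1 c2 in blast)
qed

lemma I11_not_bot: "x \<in> I11 \<Longrightarrow> at x within I11 \<noteq> bot"
  by (simp add: trivial_limit_within islimpt_Icc)

lemma hvd_unique:
  assumes "x \<in> I11" "\<And>y. y \<in> I11 \<Longrightarrow> f y = g y"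
    "(f has_vector_derivative a) (at x within I11)" "(g has_vector_derivative b) (at x within I11)"
  shows "a = b"
proof -
  have "(g has_vector_derivative a) (at x within I11)"
    using has_vector_derivative_transform[OF assms(1), of g f] assms by auto
  then show ?thesis using vector_derivative_unique_within[OF I11_not_bot[OF assms(1)]] assms(4) by blast
qed

lemma Cn_all_Sm:
  assumes "\<forall>n. Cn n h"
  shows "Sm h"
proof -
  have "\<forall>n. \<exists>D. D 0 = h \<and> (\<forall>k<n. \<forall>x\<in>I11. (D k has_vector_derivative D (Suc k) x) (at x within I11))"
    using assms unfolding Cn_def by blast
  then have "\<exists>E. \<forall>n. E n 0 = h \<and> (\<forall>k<n. \<forall>x\<in>I11. (E n k has_vector_derivative E n (Suc k) x) (at x within I11))"
    by (rule choice)
  then obtain E where E0: "\<forall>n. E n 0 = h \<and> (\<forall>k<n. \<forall>x\<in>I11. (E n k has_vector_derivative E n (Suc k) x) (at x within I11))"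
    by blast
  have E: "\<And>n. E n 0 = h"
    "\<And>n k x. k < n \<Longrightarrow> x \<in> I11 \<Longrightarrow> (E n k has_vector_derivative E n (Suc k) x) (at x within I11)"
    using E0 by auto
  have agree: "\<forall>n m. k \<le> n \<longrightarrow> k \<le> m \<longrightarrow> (\<forall>x\<in>I11. E n k x = E m k x)" for k
  proof (induction k)
    case 0 then show ?case using E(1) by simp
  next
    case (Suc k)
    show ?case
    proof (intro allI impI ballI)
      fix n m x assume nm: "Suc k \<le> n" "Suc k \<le> m" and x: "x \<in> I11"
      have eq: "\<And>y. y \<in> I11 \<Longrightarrow> E n k y = E m k y" using Suc.IH nm by auto
      show "E n (Suc k) x = E m (Suc k) x"
        by (rule hvd_unique[OF x eq]) (use E(2) nm x in auto)
    qed
  qed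
  show ?thesis unfolding Sm_def
  proof (intro exI[of _ "\<lambda>k. E k k"] conjI allI ballI)
    show "E 0 0 = h" by (rule E(1))
    fix k x assume x: "x \<in> I11"
    have "(E (Suc k) k has_vector_derivative E (Suc k) (Suc k) x) (at x within I11)"
      using E(2) x by auto
    then show "(E k k has_vector_derivative E (Suc k) (Suc k) x) (at x within I11)"
      by (rule has_vector_derivative_transform[OF x, rotated]) (use agree in auto)
  qed
qed

lemma Sm_mult:
  fixes f g :: "real \<Rightarrow> 'a::real_normed_algebra"
  shows "Sm f \<Longrightarrow> Sm g \<Longrightarrow> Sm (\<lambda>x. f x * g x)"
  by (rule Cn_all_Sm, rule allI, rule Cn_mult; erule Sm_Cn)

lemma Sm_comp:
  fixes \<phi> :: "real \<Rightarrow> complex" and g :: "real \<Rightarrow> real"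
  shows "Sm g \<Longrightarrow> g ` I11 \<subseteq> I11 \<Longrightarrow> Sm \<phi> \<Longrightarrow> Sm (\<lambda>x. \<phi> (g x))"
  by (rule Cn_all_Sm, rule allI, rule Cn_comp)

lemma Sm_transform:
  assumes "Sm f" "\<And>x. x \<in> I11 \<Longrightarrow> f x = g x"
  shows "Sm g"
proof -
  obtain D where D: "D 0 = f" "\<forall>k. \<forall>x\<in>I11. (D k has_vector_derivative D (Suc k) x) (at x within I11)"
    using assms(1) unfolding Sm_def by blast
  show ?thesis unfolding Sm_def
  proof (intro exI[of _ "D(0:=g)"] conjI allI ballI)
    fix k x assume x: "x \<in> I11"
    show "((D(0 := g)) k has_vector_derivative (D(0 := g)) (Suc k) x) (at x within I11)"
    proof (cases k)
      case 0
      then show ?thesis using D x assms(2)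
        by (auto intro: has_vector_derivative_transform[OF x, of _ f])
    next
      case (Suc j) then show ?thesis using D x by auto
    qed
  qed simp
qed

lemma deriv_chain_Sm: "deriv_chain f D \<Longrightarrow> Sm f"
proof -
  assume d: "deriv_chain f D"
  have "Sm (D 0)" unfolding Sm_def
    by (rule exI[of _ D]) (use d in \<open>simp add: deriv_chain_def\<close>)
  then show "Sm f" by (rule Sm_transform) (use d in \<open>simp add: deriv_chain_def\<close>)
qed

lemma Sm_deriv_chain: "Sm f \<Longrightarrow> \<exists>D. deriv_chain f D"
proof -
  assume "Sm f"
  then obtain D where "D 0 = f" "\<forall>k. \<forall>x\<in>I11. (D k has_vector_derivative D (Suc k) x) (at x within I11)"
    unfolding Sm_def by blast
  then show ?thesis unfolding deriv_chain_def by (intro exI[of _ D]) simp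
qed


lemma Sm_powr_real:
  fixes a b e :: real
  assumes pos: "\<And>y. y \<in> I11 \<Longrightarrow> a + b*y > 0"
  shows "Sm (\<lambda>y. (a + b*y) powr e)"
  unfolding Sm_def
proof (intro exI[of _ "\<lambda>k y. (\<Prod>j<k. (e - real j)) * b^k * (a + b*y) powr (e - real k)"] conjI allI ballI)
  show "(\<lambda>k y. (\<Prod>j<k. (e - real j)) * b^k * (a + b*y) powr (e - real k)) 0 = (\<lambda>y. (a + b*y) powr e)"
    by simp
  fix k y assume y: "y \<in> I11"
  have d: "((\<lambda>y. (a + b*y) powr (e - real k)) has_real_derivative
      (e - real k) * (a + b*y) powr (e - real k - of_nat 1) * b) (at y)"
  proof -
    have g: "((\<lambda>y. a+b*y) has_real_derivative b) (at y)"
      by (rule derivative_eq_intros refl | simp)+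
    show ?thesis by (rule DERIV_fun_powr[OF g pos[OF y]])
  qed
  have "((\<lambda>y. (\<Prod>j<k. (e - real j)) * b^k * (a + b*y) powr (e - real k)) has_real_derivative
      (\<Prod>j<k. (e - real j)) * b^k * ((e - real k) * (a + b*y) powr (e - real k - of_nat 1) * b)) (at y within I11)"
    by (rule DERIV_cmult, rule has_field_derivative_at_within, rule d)
  then show "((\<lambda>y. (\<Prod>j<k. (e - real j)) * b^k * (a + b*y) powr (e - real k)) has_vector_derivative
      (\<Prod>j<Suc k. (e - real j)) * b^(Suc k) * (a + b*y) powr (e - real (Suc k))) (at y within I11)"
    unfolding has_real_derivative_iff_has_vector_derivative[symmetric]
    by (rule DERIV_cong) (simp add: algebra_simps diff_diff_eq)
qed

lemma Sm_powr_cplx: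
  fixes a b :: real and e :: complex
  assumes pos: "\<And>y. y \<in> I11 \<Longrightarrow> a + b*y > 0"
  shows "Sm (\<lambda>y. complex_of_real (a + b*y) powr e)"
  unfolding Sm_def
proof (intro exI[of _ "\<lambda>k y. (\<Prod>j<k. (e - of_nat j)) * of_real b^k * complex_of_real (a + b*y) powr (e - of_nat k)"] conjI allI ballI)
  show "(\<lambda>k y. (\<Prod>j<k. (e - of_nat j)) * of_real b^k * complex_of_real (a + b*y) powr (e - of_nat k)) 0
     = (\<lambda>y. complex_of_real (a + b*y) powr e)"
    by simp
  fix k y assume y: "y \<in> I11"
  define f where "f = (\<lambda>z::complex. (of_real a + of_real b * z) powr (e - of_nat k))"
  have nn: "of_real a + of_real b * of_real y \<notin> \<real>\<^sub>\<le>\<^sub>0"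
    using pos[OF y] by (metis nonpos_Reals_of_real_iff not_less of_real_add of_real_mult)
  have "(f has_field_derivative ((e - of_nat k) * (of_real a + of_real b * of_real y) powr (e - of_nat k - 1)) * of_real b) (at (of_real y))"
  proof -
    have gc: "((\<lambda>z. of_real a + of_real b * z) has_field_derivative of_real b) (at (of_real y))"
      by (rule derivative_eq_intros refl | simp)+
    show ?thesis
      using DERIV_chain2[OF has_field_derivative_powr[OF nn, of "e - of_nat k"] gc] unfolding f_def by simp
  qed
  from has_vector_derivative_real_field[OF this, where s="I11"]
  have "((\<lambda>y. complex_of_real (a + b*y) powr (e - of_nat k)) has_vector_derivative
       ((e - of_nat k) * complex_of_real (a + b*y) powr (e - of_nat k - 1)) * of_real b) (at y within I11)"
    unfolding f_def by simp
  from has_vector_derivative_mult_right[OF this, where a="(\<Prod>j<k. (e - of_nat j)) * of_real b^k"]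
  show "((\<lambda>y. (\<Prod>j<k. (e - of_nat j)) * of_real b^k * complex_of_real (a + b*y) powr (e - of_nat k)) has_vector_derivative
      (\<Prod>j<Suc k. (e - of_nat j)) * of_real b^(Suc k) * complex_of_real (a + b*y) powr (e - of_nat (Suc k))) (at y within I11)"
    by (simp add: algebra_simps diff_diff_eq mult.assoc)
qed

lemma Sm_lin: "Sm (\<lambda>y::real. y - c)"
  unfolding Sm_def
proof (intro exI[of _ "\<lambda>k y. if k = 0 then y - c else if k = 1 then 1 else 0"] conjI allI ballI)
  fix k :: nat and y :: real
  show "((\<lambda>y. if k = 0 then y - c else if k = 1 then 1 else 0) has_vector_derivative
         (if Suc k = 0 then y - c else if Suc k = 1 then 1 else 0)) (at y within I11)"
    by (cases "k = 0") (simp_all add: has_real_derivative_iff_has_vector_derivative[symmetric], (rule derivative_eq_intros refl | simp)+)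
qed simp

definition mob :: "real \<Rightarrow> real \<Rightarrow> real" where
  "mob c y = (y - c) / (1 - c*y)"

lemma mob_den: "\<bar>c\<bar> < 1 \<Longrightarrow> y \<in> I11 \<Longrightarrow> 1 - c*y > 0"
proof -
  assume c: "\<bar>c\<bar> < 1" and y: "y \<in> I11"
  have y1: "\<bar>y\<bar> \<le> 1" using y by auto
  have "\<bar>c\<bar> * \<bar>y\<bar> \<le> \<bar>c\<bar>" by (rule mult_left_le[OF y1]) simp
  moreover have "c*y \<le> \<bar>c\<bar> * \<bar>y\<bar>" by (metis abs_ge_self abs_mult)
  ultimately show ?thesis using c by linarith
qed

lemma mob_maps: "\<bar>c\<bar> < 1 \<Longrightarrow> y \<in> I11 \<Longrightarrow> mob c y \<in> I11"
proof -
  assume c: "\<bar>c\<bar> < 1" and y: "y \<in> I11"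
  have d: "1 - c*y > 0" by (rule mob_den[OF c y])
  have "(1+c)*(1-y) \<ge> 0" by (rule mult_nonneg_nonneg) (use c y in auto)
  then have "y - c \<le> 1 - c*y" by (simp add: algebra_simps)
  moreover have "(1-c)*(1+y) \<ge> 0" by (rule mult_nonneg_nonneg) (use c y in auto)
  then have "-(1 - c*y) \<le> y - c" by (simp add: algebra_simps)
  ultimately show ?thesis using d by (simp add: mob_def pos_divide_le_eq le_divide_eq)
qed

lemma mob_inv: "\<bar>c\<bar> < 1 \<Longrightarrow> y \<in> I11 \<Longrightarrow> mob (-c) (mob c y) = y"
proof -
  assume c: "\<bar>c\<bar> < 1" and y: "y \<in> I11"
  have d: "1 - c*y \<noteq> 0" using mob_den[OF c y] by simp
  have "c^2 < 1" using c by (simp add: abs_square_less_1)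
  then have c2: "1 - c*c \<noteq> 0" by (simp add: power2_eq_square)
  have e1: "mob c y + c = y*(1-c*c)/(1-c*y)" using d unfolding mob_def by (simp add: field_simps; simp add: algebra_simps)
  have e2: "1 + c*mob c y = (1-c*c)/(1-c*y)" using d unfolding mob_def by (simp add: field_simps; simp add: algebra_simps)
  have "mob (-c) (mob c y) = (mob c y + c)/(1 + c * mob c y)" by (simp add: mob_def)
  also have "\<dots> = y" unfolding e1 e2 using d c2 by simp
  finally show ?thesis .
qed

lemma Sm_mob: "\<bar>c\<bar> < 1 \<Longrightarrow> Sm (mob c)"
proof -
  assume c: "\<bar>c\<bar> < 1"
  have "Sm (\<lambda>y. (y - c) * (1 + (-c)*y) powr (-1))"
    by (rule Sm_mult[OF Sm_lin Sm_powr_real]) (use mob_den[OF c] in auto)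
  then show ?thesis
  proof (rule Sm_transform)
    fix x :: real assume x: "x \<in> I11"
    have p: "1 + (-c)*x > 0" using mob_den[OF c x] by simp
    show "(x - c) * (1 + (-c)*x) powr (-1) = mob c x"
      unfolding powr_neg_one[OF p] mob_def by simp
  qed
qed

lemma mob_deriv: "\<bar>c\<bar> < 1 \<Longrightarrow> y \<in> I11 \<Longrightarrow> (mob c has_real_derivative (1 - c^2)/(1 - c*y)^2) (at y)"
proof -
  assume c: "\<bar>c\<bar> < 1" and y: "y \<in> I11"
  have d: "1 - c*y \<noteq> 0" using mob_den[OF c y] by simp
  have "((\<lambda>y. (y - c)/(1 - c*y)) has_real_derivative ((1 - 0)*(1 - c*y) - (y - c)*(0 - c*1))/((1 - c*y)*(1 - c*y))) (at y)"
    by (rule DERIV_divide[OF DERIV_diff[OF DERIV_ident DERIV_const] DERIV_diff[OF DERIV_const DERIV_cmult[OF DERIV_ident]] d])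
  then show ?thesis unfolding mob_def[abs_def]
    by (rule DERIV_cong) (simp add: power2_eq_square algebra_simps)
qed


lemma alg:
  fixes S b ib lam u v w P :: complex
  assumes hb: "b * ib = 1"
  shows "(lam^2-lam)*(P*u) + (2*lam*(S-b) + 2*S)*(P*(lam*ib*u + ((S^2-1)*ib^2) * v))
   + ((S-b)^2-1)*(lam*ib*P*(lam*ib*u+((S^2-1)*ib^2) * v)
      + P*(lam*(ib*ib*u + ib*(((S^2-1)*ib^2) * v)) + (2*ib*((S^2-1)*ib^2) * v + ((S^2-1)*ib^2)*(((S^2-1)*ib^2)*w))))
   = P*((S^2-1)*ib^2)*((lam^2+lam)*u + ((2*lam+2)*((S*(S-b)-1)*ib) + 2*b) * v + (((S*(S-b)-1)*ib)^2-1)*w)"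
  using hb by algebra

definition gm :: "real \<Rightarrow> real" where "gm \<alpha> = 1 / sqrt (1+\<alpha>)"
definition rr :: "real \<Rightarrow> real" where "rr \<alpha> = sqrt (1 - (gm \<alpha>)^2)"
definition qf :: "real \<Rightarrow> real \<Rightarrow> real" where "qf \<alpha> y = gm \<alpha> / (1 - gm \<alpha> * y)"
definition Y1f :: "real \<Rightarrow> real \<Rightarrow> real" where "Y1f \<alpha> y = (1 - (gm \<alpha>)^2) / (1 - gm \<alpha> * y)^2"
definition Pf :: "real \<Rightarrow> complex \<Rightarrow> real \<Rightarrow> complex" where
  "Pf \<alpha> lam y = complex_of_real ((1 - gm \<alpha> * y) / rr \<alpha>) powr (-lam)"

definition psi1 :: "real \<Rightarrow> complex \<Rightarrow> (real \<Rightarrow> complex) \<Rightarrow> (real \<Rightarrow> complex) \<Rightarrow> real \<Rightarrow> complex" where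
  "psi1 \<alpha> lam \<phi> \<phi>1 y = Pf \<alpha> lam y * (lam * of_real (qf \<alpha> y) * \<phi> (mob (gm \<alpha>) y)
      + of_real (Y1f \<alpha> y) * \<phi>1 (mob (gm \<alpha>) y))"

definition psi2 :: "real \<Rightarrow> complex \<Rightarrow> (real \<Rightarrow> complex) \<Rightarrow> (real \<Rightarrow> complex) \<Rightarrow> (real \<Rightarrow> complex) \<Rightarrow> real \<Rightarrow> complex" where
  "psi2 \<alpha> lam \<phi> \<phi>1 \<phi>2 y =
     lam * of_real (qf \<alpha> y) * Pf \<alpha> lam y * (lam * of_real (qf \<alpha> y) * \<phi> (mob (gm \<alpha>) y) + of_real (Y1f \<alpha> y) * \<phi>1 (mob (gm \<alpha>) y))
   + Pf \<alpha> lam y * (lam * (of_real (qf \<alpha> y) * of_real (qf \<alpha> y) * \<phi> (mob (gm \<alpha>) y)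
          + of_real (qf \<alpha> y) * (of_real (Y1f \<alpha> y) * \<phi>1 (mob (gm \<alpha>) y)))
      + (2 * of_real (qf \<alpha> y) * of_real (Y1f \<alpha> y) * \<phi>1 (mob (gm \<alpha>) y)
         + of_real (Y1f \<alpha> y) * (of_real (Y1f \<alpha> y) * \<phi>2 (mob (gm \<alpha>) y))))"

lemma lorentz_eq: "lorentz \<alpha> lam \<phi> = (\<lambda>y. Pf \<alpha> lam y * \<phi> (mob (gm \<alpha>) y))"
  by (rule ext) (simp add: lorentz_def Let_def Pf_def gm_def mob_def rr_def)

lemma powr_cplx_deriv:
  fixes a b :: real and e :: complex
  assumes pos: "a + b*y > 0"
  shows "((\<lambda>y. complex_of_real (a + b*y) powr e) has_vector_derivative
       (e * complex_of_real (a + b*y) powr (e - 1)) * of_real b) (at y within S)"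
proof -
  define f where "f = (\<lambda>z::complex. (of_real a + of_real b * z) powr e)"
  have nn: "of_real a + of_real b * of_real y \<notin> \<real>\<^sub>\<le>\<^sub>0"
    using pos by (metis nonpos_Reals_of_real_iff not_less of_real_add of_real_mult)
  have gc: "((\<lambda>z. of_real a + of_real b * z) has_field_derivative of_real b) (at (of_real y))"
    by (rule derivative_eq_intros refl | simp)+
  have "(f has_field_derivative ((e * (of_real a + of_real b * of_real y) powr (e - 1)) * of_real b)) (at (of_real y))"
    using DERIV_chain2[OF has_field_derivative_powr[OF nn, of e] gc] unfolding f_def by simp
  from has_vector_derivative_real_field[OF this, where s="S"]
  show ?thesis unfolding f_def by simp
qed

lemma realfacts:
  fixes s y a :: real
  assumes s2: "s^2 = 1 + a" and s1: "s > 1" and y: "y \<le> 1" and a: "a > 0"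
  shows "(1/s)/(1 - (1/s)*y) = 1/(s-y)"
    and "(1 - (1/s)^2)/(1 - (1/s)*y)^2 = (s^2-1)*(1/(s-y))^2"
    and "(y - 1/s)/(1 - (1/s)*y) = (s*y-1)*(1/(s-y))"
    and "2*a/(s + (y - 1/s)/(1 - (1/s)*y)) = 2*(s-y)"
proof -
  have s0: "s \<noteq> 0" using s1 by simp
  have sy: "s - y \<noteq> 0" using s1 y by simp
  have sy': "s - y > 0" using s1 y by simp
  show "(1/s)/(1 - (1/s)*y) = 1/(s-y)" using s0 sy by (simp add: field_simps)
  show "(1 - (1/s)^2)/(1 - (1/s)*y)^2 = (s^2-1)*(1/(s-y))^2" using s0 sy by (simp add: field_simps)
  show "(y - 1/s)/(1 - (1/s)*y) = (s*y-1)*(1/(s-y))" using s0 sy by (simp add: field_simps)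
  have "s + (y - 1/s)/(1 - (1/s)*y) = a/(s-y)"
  proof -
    have "s + (y - 1/s)/(1 - (1/s)*y) = (s * s - 1)/(s-y)" using s0 sy by (simp add: field_simps)
    also have "s * s - 1 = a" using s2 by (simp add: power2_eq_square)
    finally show ?thesis .
  qed
  then show "2*a/(s + (y - 1/s)/(1 - (1/s)*y)) = 2*(s-y)" using a sy by simp
qed

lemma aux_Y1:
  fixes D g c :: real
  assumes "D \<noteq> 0"
  shows "(0*D^2 - c*(of_nat 2 * ((0 - g*1) * D^(2 - Suc 0))))/(D^2*D^2) = 2*(g/D)*(c/D^2)"
  using assms by (simp add: field_simps power2_eq_square)

context
  fixes \<alpha> :: real
  assumes apos: "\<alpha> > 0"
begin

lemma s_gt1: "sqrt (1+\<alpha>) > 1"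
  using apos by (simp add: real_less_rsqrt)

lemma gm_pos: "gm \<alpha> > 0" and gm_lt1: "gm \<alpha> < 1" and gm_abs: "\<bar>gm \<alpha>\<bar> < 1"
  using s_gt1 by (auto simp: gm_def)

lemma rr_pos: "rr \<alpha> > 0"
proof -
  have "(gm \<alpha>)^2 < 1" using gm_abs by (simp add: abs_square_less_1)
  then show ?thesis unfolding rr_def by simp
qed

lemma den_pos: "y \<in> I11 \<Longrightarrow> 1 - gm \<alpha> * y > 0"
  using mob_den[OF gm_abs] .

lemma l_P:
  assumes y: "y \<in> I11"
  shows "(Pf \<alpha> lam has_vector_derivative lam * of_real (qf \<alpha> y) * Pf \<alpha> lam y) (at y within I11)"
proof -
  define r where "r = rr \<alpha>"
  define g where "g = gm \<alpha>"
  have r: "r > 0" using rr_pos by (simp add: r_def)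
  have d: "1 - g*y > 0" using den_pos[OF y] by (simp add: g_def)
  have fe: "Pf \<alpha> lam = (\<lambda>y. complex_of_real (1/r + (-g/r)*y) powr (-lam))"
    by (rule ext) (simp add: Pf_def r_def g_def diff_divide_distrib)
  have pos: "1/r + (-g/r)*y > 0" using d r by (simp add: field_simps)
  define w where "w = complex_of_real (1/r + (-g/r)*y)"
  have w0: "w \<noteq> 0" unfolding w_def of_real_eq_0_iff using pos by linarith
  have wp1: "w powr 1 = w" using w0 by (simp add: powr_def)
  have w1: "w powr (-lam - 1) = w powr (-lam) / w"
    using powr_diff[of w "-lam" 1] wp1 by simp
  have Pw: "Pf \<alpha> lam y = w powr (-lam)" by (simp add: fe w_def)
  have real_eq: "(-g/r) / (1/r + (-g/r)*y) = - (g / (1 - g*y))"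
    using r d by (simp add: field_simps)
  have "(Pf \<alpha> lam has_vector_derivative (-lam * w powr (-lam - 1)) * of_real (-g/r)) (at y within I11)"
    unfolding fe w_def by (rule powr_cplx_deriv[OF pos])
  moreover have "(-lam * w powr (-lam - 1)) * of_real (-g/r) = lam * of_real (qf \<alpha> y) * Pf \<alpha> lam y"
  proof -
    have "(-lam * w powr (-lam - 1)) * of_real (-g/r) = -lam * w powr (-lam) * (of_real (-g/r) / w)"
      unfolding w1 by simp
    also have "of_real (-g/r) / w = of_real (- (g / (1 - g*y)))"
      unfolding real_eq[symmetric] w_def by simp
    finally show ?thesis by (simp add: Pw qf_def g_def)
  qed
  ultimately show ?thesis by (rule has_vector_derivative_eq_rhs)
qed

lemma l_q:
  assumes y: "y \<in> I11"
  shows "((\<lambda>y. complex_of_real (qf \<alpha> y)) has_vector_derivative of_real (qf \<alpha> y) * of_real (qf \<alpha> y)) (at y within I11)"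
proof -
  define g where "g = gm \<alpha>"
  have d: "1 - g*y \<noteq> 0" using den_pos[OF y] by (simp add: g_def)
  have "((\<lambda>y. g / (1 - g*y)) has_real_derivative (0*(1 - g*y) - g*(0 - g*1))/((1 - g*y)*(1 - g*y))) (at y)"
    by (rule DERIV_divide[OF DERIV_const DERIV_diff[OF DERIV_const DERIV_cmult[OF DERIV_ident]] d])
  then have "((\<lambda>y. qf \<alpha> y) has_real_derivative qf \<alpha> y * qf \<alpha> y) (at y within I11)"
    unfolding qf_def g_def[symmetric]
    by (rule has_field_derivative_at_within[OF DERIV_cong]) (simp add: field_simps)
  from has_vector_derivative_of_real[OF this] show ?thesis by simp
qed

lemma l_Y1:
  assumes y: "y \<in> I11"
  shows "((\<lambda>y. complex_of_real (Y1f \<alpha> y)) has_vector_derivative 2 * of_real (qf \<alpha> y) * of_real (Y1f \<alpha> y)) (at y within I11)"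
proof -
  define g where "g = gm \<alpha>"
  have d: "1 - g*y \<noteq> 0" using den_pos[OF y] by (simp add: g_def)
  have d2: "(1 - g*y)^2 \<noteq> 0" using d by simp
  have "((\<lambda>y. (1 - g^2) / (1 - g*y)^2) has_real_derivative
      (0*(1 - g*y)^2 - (1 - g^2)*(of_nat 2 * ((0 - g*1) * (1 - g*y)^(2 - Suc 0))))/((1 - g*y)^2*(1 - g*y)^2)) (at y)"
    by (rule DERIV_divide[OF DERIV_const DERIV_power[OF DERIV_diff[OF DERIV_const DERIV_cmult[OF DERIV_ident]]] d2])
  then have "((\<lambda>y. Y1f \<alpha> y) has_real_derivative 2 * qf \<alpha> y * Y1f \<alpha> y) (at y within I11)"
    unfolding Y1f_def qf_def g_def[symmetric]
    by (rule has_field_derivative_at_within[OF DERIV_cong]) (rule aux_Y1[OF d])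
  from has_vector_derivative_of_real[OF this] show ?thesis by simp
qed

lemma l_mob:
  assumes y: "y \<in> I11"
  shows "(mob (gm \<alpha>) has_vector_derivative Y1f \<alpha> y) (at y within I11)"
  using has_field_derivative_at_within[OF mob_deriv[OF gm_abs y]]
  by (simp add: has_real_derivative_iff_has_vector_derivative Y1f_def)

lemma l_comp:
  assumes y: "y \<in> I11" and f: "\<forall>x\<in>I11. (f has_vector_derivative f' x) (at x within I11)"
  shows "((\<lambda>y. f (mob (gm \<alpha>) y)) has_vector_derivative of_real (Y1f \<alpha> y) * f' (mob (gm \<alpha>) y)) (at y within I11)"
proof -
  have my: "mob (gm \<alpha>) y \<in> I11" by (rule mob_maps[OF gm_abs y])
  have sub: "mob (gm \<alpha>) ` I11 \<subseteq> I11" using mob_maps[OF gm_abs] by blast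
  have "(f has_vector_derivative f' (mob (gm \<alpha>) y)) (at (mob (gm \<alpha>) y) within mob (gm \<alpha>) ` I11)"
    by (rule has_vector_derivative_within_subset[OF f[rule_format, OF my] sub])
  from vector_diff_chain_within[OF l_mob[OF y] this]
  show ?thesis by (simp add: o_def scaleR_conv_of_real)
qed


lemma l_psi:
  assumes y: "y \<in> I11" and d0: "\<forall>x\<in>I11. (\<phi> has_vector_derivative \<phi>1 x) (at x within I11)"
  shows "(lorentz \<alpha> lam \<phi> has_vector_derivative psi1 \<alpha> lam \<phi> \<phi>1 y) (at y within I11)"
proof -
  from has_vector_derivative_mult[OF l_P[OF y] l_comp[OF y d0]]
  have "((\<lambda>y. Pf \<alpha> lam y * \<phi> (mob (gm \<alpha>) y)) has_vector_derivative
     Pf \<alpha> lam y * (of_real (Y1f \<alpha> y) * \<phi>1 (mob (gm \<alpha>) y)) + lam * of_real (qf \<alpha> y) * Pf \<alpha> lam y * \<phi> (mob (gm \<alpha>) y)) (at y within I11)" .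
  then show ?thesis unfolding lorentz_eq
    by (rule has_vector_derivative_eq_rhs) (simp add: psi1_def algebra_simps)
qed

lemma l_psi1:
  assumes y: "y \<in> I11" and d0: "\<forall>x\<in>I11. (\<phi> has_vector_derivative \<phi>1 x) (at x within I11)"
    and d1: "\<forall>x\<in>I11. (\<phi>1 has_vector_derivative \<phi>2 x) (at x within I11)"
  shows "(psi1 \<alpha> lam \<phi> \<phi>1 has_vector_derivative psi2 \<alpha> lam \<phi> \<phi>1 \<phi>2 y) (at y within I11)"
proof -
  have e: "psi1 \<alpha> lam \<phi> \<phi>1 = (\<lambda>y. Pf \<alpha> lam y * (lam * of_real (qf \<alpha> y) * \<phi> (mob (gm \<alpha>) y)
      + of_real (Y1f \<alpha> y) * \<phi>1 (mob (gm \<alpha>) y)))"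
    by (rule ext) (simp add: psi1_def)
  have A: "((\<lambda>y. lam * complex_of_real (qf \<alpha> y)) has_vector_derivative lam * (of_real (qf \<alpha> y) * of_real (qf \<alpha> y))) (at y within I11)"
    by (rule has_vector_derivative_mult_right[OF l_q[OF y]])
  have B: "((\<lambda>y. lam * complex_of_real (qf \<alpha> y) * \<phi> (mob (gm \<alpha>) y)) has_vector_derivative
      lam * of_real (qf \<alpha> y) * (of_real (Y1f \<alpha> y) * \<phi>1 (mob (gm \<alpha>) y)) + lam * (of_real (qf \<alpha> y) * of_real (qf \<alpha> y)) * \<phi> (mob (gm \<alpha>) y)) (at y within I11)"
    by (rule has_vector_derivative_mult[OF A l_comp[OF y d0]])
  have C: "((\<lambda>y. complex_of_real (Y1f \<alpha> y) * \<phi>1 (mob (gm \<alpha>) y)) has_vector_derivative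
      of_real (Y1f \<alpha> y) * (of_real (Y1f \<alpha> y) * \<phi>2 (mob (gm \<alpha>) y)) + 2 * of_real (qf \<alpha> y) * of_real (Y1f \<alpha> y) * \<phi>1 (mob (gm \<alpha>) y)) (at y within I11)"
    by (rule has_vector_derivative_mult[OF l_Y1[OF y] l_comp[OF y d1]])
  note D = has_vector_derivative_mult[OF l_P[OF y] has_vector_derivative_add[OF B C]]
  show ?thesis unfolding e
    by (rule has_vector_derivative_eq_rhs[OF D]) (simp add: psi2_def algebra_simps)
qed

lemma l_ident:
  assumes y: "y \<in> I11"
  shows "(lam^2 - lam) * lorentz \<alpha> lam \<phi> y + (2*lam * of_real y + of_real (2 * sqrt (1+\<alpha>))) * psi1 \<alpha> lam \<phi> \<phi>1 y
      + of_real (y^2 - 1) * psi2 \<alpha> lam \<phi> \<phi>1 \<phi>2 y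
    = Pf \<alpha> lam y * of_real (Y1f \<alpha> y) * ((lam^2 + lam) * \<phi> (mob (gm \<alpha>) y)
        + ((2*lam + 2) * of_real (mob (gm \<alpha>) y) + of_real (2*\<alpha> / (sqrt (1+\<alpha>) + mob (gm \<alpha>) y))) * \<phi>1 (mob (gm \<alpha>) y)
        + of_real ((mob (gm \<alpha>) y)^2 - 1) * \<phi>2 (mob (gm \<alpha>) y))"
proof -
  have s2: "sqrt (1+\<alpha>)^2 = 1+\<alpha>" using apos by simp
  have y1: "y \<le> 1" using y by simp
  note rf = realfacts[OF s2 s_gt1 y1 apos]
  have sy: "sqrt (1+\<alpha>) - y > 0" using s_gt1 y1 by linarith
  define S where "S = complex_of_real (sqrt (1+\<alpha>))"
  define b where "b = complex_of_real (sqrt (1+\<alpha>) - y)"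
  define ib where "ib = complex_of_real (1 / (sqrt (1+\<alpha>) - y))"
  have hb: "b * ib = 1" unfolding b_def ib_def of_real_mult[symmetric] using sy by simp
  have c5: "complex_of_real y = S - b" by (simp add: S_def b_def)
  have c1: "complex_of_real (qf \<alpha> y) = ib"
    unfolding ib_def by (simp only: qf_def gm_def rf(1))
  have c2: "complex_of_real (Y1f \<alpha> y) = (S^2-1)*ib^2"
    unfolding ib_def S_def by (simp only: Y1f_def gm_def rf(2) of_real_mult of_real_diff of_real_power of_real_1)
  have "complex_of_real (mob (gm \<alpha>) y) = (S * of_real y - 1) * ib"
    unfolding ib_def S_def by (simp only: mob_def gm_def rf(3) of_real_mult of_real_diff of_real_1)
  then have c3: "complex_of_real (mob (gm \<alpha>) y) = (S*(S-b)-1)*ib" by (simp only: c5)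
  have c4: "complex_of_real (2*\<alpha> / (sqrt (1+\<alpha>) + mob (gm \<alpha>) y)) = 2*b"
    unfolding b_def by (simp only: mob_def gm_def rf(4) of_real_mult of_real_numeral)
  have c6: "complex_of_real (2 * sqrt (1+\<alpha>)) = 2*S" unfolding S_def by simp
  have c7: "complex_of_real (y^2 - 1) = (S-b)^2-1" by (simp only: of_real_diff of_real_power of_real_1 c5)
  have c8: "complex_of_real ((mob (gm \<alpha>) y)^2 - 1) = ((S*(S-b)-1)*ib)^2-1"
    by (simp only: of_real_diff of_real_power of_real_1 c3)
  show ?thesis unfolding lorentz_eq psi1_def psi2_def
    by (simp only: c1 c2 c3 c4 c6 c7 c8 c5) (use hb in algebra)
qed

lemma Pf_nz: "y \<in> I11 \<Longrightarrow> Pf \<alpha> lam y \<noteq> 0"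
proof -
  assume y: "y \<in> I11"
  have "(1 - gm \<alpha>*y)/rr \<alpha> > 0" using den_pos[OF y] rr_pos by simp
  then show ?thesis unfolding Pf_def powr_eq_0_iff of_real_eq_0_iff by linarith
qed

lemma Y1f_nz: "y \<in> I11 \<Longrightarrow> Y1f \<alpha> y \<noteq> 0"
proof -
  assume y: "y \<in> I11"
  have "(gm \<alpha>)^2 < 1" using gm_abs by (simp add: abs_square_less_1)
  moreover have "1 - gm \<alpha>*y \<noteq> 0" using den_pos[OF y] by simp
  ultimately show ?thesis unfolding Y1f_def by simp
qed

lemma Sm_Pf: "Sm (Pf \<alpha> lam)"
proof -
  define r where "r = rr \<alpha>"
  define g where "g = gm \<alpha>"
  have r: "r > 0" using rr_pos by (simp add: r_def)
  have fe: "Pf \<alpha> lam = (\<lambda>y. complex_of_real (1/r + (-g/r)*y) powr (-lam))"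
    by (rule ext) (simp add: Pf_def r_def g_def diff_divide_distrib)
  have pos: "1/r + (-g/r)*y > 0" if y: "y \<in> I11" for y
  proof -
    have d: "1 - g*y > 0" using den_pos[OF y] by (simp add: g_def)
    then show ?thesis using r by (simp add: field_simps)
  qed
  show ?thesis unfolding fe by (rule Sm_powr_cplx[OF pos])
qed

lemma Pf_inv: "Pf \<alpha> lam y * Pf \<alpha> (-lam) y = 1" if y: "y \<in> I11"
proof -
  define w where "w = complex_of_real ((1 - gm \<alpha> * y) / rr \<alpha>)"
  have "(1 - gm \<alpha>*y)/rr \<alpha> > 0" using den_pos[OF y] rr_pos by simp
  then have w0: "w \<noteq> 0" unfolding w_def of_real_eq_0_iff by linarith
  have "Pf \<alpha> lam y * Pf \<alpha> (-lam) y = w powr (-lam) * w powr lam"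
    by (simp add: Pf_def w_def)
  also have "\<dots> = w powr (-lam + lam)" by (rule powr_add[symmetric])
  also have "\<dots> = 1" using w0 by (simp add: powr_def)
  finally show ?thesis .
qed

lemma chain_d0:
  assumes "deriv_chain f D"
  shows "\<forall>x\<in>I11. (f has_vector_derivative D 1 x) (at x within I11)"
    and "\<forall>x\<in>I11. (D 1 has_vector_derivative D 2 x) (at x within I11)"
proof -
  from assms have D0: "\<forall>x\<in>I11. D 0 x = f x" and Dk: "\<forall>k. \<forall>x\<in>I11. (D k has_vector_derivative D (Suc k) x) (at x within I11)"
    unfolding deriv_chain_def by auto
  show "\<forall>x\<in>I11. (f has_vector_derivative D 1 x) (at x within I11)"
  proof
    fix x :: real assume x: "x \<in> I11"
    have "(D 0 has_vector_derivative D 1 x) (at x within I11)" using Dk x by simp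
    then show "(f has_vector_derivative D 1 x) (at x within I11)"
      by (rule has_vector_derivative_transform[OF x, rotated]) (use D0 in auto)
  qed
  show "\<forall>x\<in>I11. (D 1 has_vector_derivative D 2 x) (at x within I11)"
    using Dk by (simp add: numeral_2_eq_2)
qed

lemma derivs_match:
  assumes E: "deriv_chain (lorentz \<alpha> lam \<phi>) E" and y: "y \<in> I11"
    and d0: "\<forall>x\<in>I11. (\<phi> has_vector_derivative \<phi>1 x) (at x within I11)"
    and d1: "\<forall>x\<in>I11. (\<phi>1 has_vector_derivative \<phi>2 x) (at x within I11)"
  shows "E 1 y = psi1 \<alpha> lam \<phi> \<phi>1 y \<and> E 2 y = psi2 \<alpha> lam \<phi> \<phi>1 \<phi>2 y"
proof -
  note c = chain_d0[OF E]
  have e1: "E 1 x = psi1 \<alpha> lam \<phi> \<phi>1 x" if x: "x \<in> I11" for x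
    by (rule hvd_unique[OF x, of "lorentz \<alpha> lam \<phi>" "lorentz \<alpha> lam \<phi>"]) (use c(1) x l_psi[OF x d0] in auto)
  have e2: "E 2 y = psi2 \<alpha> lam \<phi> \<phi>1 \<phi>2 y"
    by (rule hvd_unique[OF y, of "E 1" "psi1 \<alpha> lam \<phi> \<phi>1"]) (use e1 c(2) y l_psi1[OF y d0 d1] in auto)
  show ?thesis using e1[OF y] e2 by simp
qed

lemma forward:
  assumes "solves_E1 \<alpha> lam \<phi>"
  shows "solves_E2 \<alpha> lam (lorentz \<alpha> lam \<phi>)"
proof -
  obtain D where D: "deriv_chain \<phi> D" and eq: "\<forall>y\<in>I11. (lam^2 + lam) * \<phi> y
        + ((2*lam + 2) * of_real y + of_real (2*\<alpha> / (sqrt (1+\<alpha>) + y))) * D 1 y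
        + of_real (y^2 - 1) * D 2 y = 0"
    using assms unfolding solves_E1_def by blast
  note c = chain_d0[OF D]
  have smp: "Sm \<phi>" by (rule deriv_chain_Sm[OF D])
  have sub: "mob (gm \<alpha>) ` I11 \<subseteq> I11" using mob_maps[OF gm_abs] by blast
  have "Sm (\<lambda>y. Pf \<alpha> lam y * \<phi> (mob (gm \<alpha>) y))"
    by (rule Sm_mult[OF Sm_Pf Sm_comp[OF Sm_mob[OF gm_abs] sub smp]])
  then obtain E where E: "deriv_chain (lorentz \<alpha> lam \<phi>) E"
    unfolding lorentz_eq[symmetric] using Sm_deriv_chain by blast
  show ?thesis unfolding solves_E2_def
  proof (intro exI[of _ E] conjI ballI)
    show "deriv_chain (lorentz \<alpha> lam \<phi>) E" by (rule E)
    fix y :: real assume y: "y \<in> I11"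
    have m: "mob (gm \<alpha>) y \<in> I11" by (rule mob_maps[OF gm_abs y])
    note dm = derivs_match[OF E y c(1) c(2)]
    show "(lam^2 - lam) * lorentz \<alpha> lam \<phi> y + (2*lam * of_real y + of_real (2 * sqrt (1+\<alpha>))) * E 1 y
        + of_real (y^2 - 1) * E 2 y = 0"
      unfolding dm[THEN conjunct1] dm[THEN conjunct2] l_ident[OF y] using eq m by simp
  qed
qed

lemma backward:
  assumes "solves_E2 \<alpha> lam \<psi>"
  shows "\<exists>\<phi>. solves_E1 \<alpha> lam \<phi> \<and> (\<forall>y\<in>I11. \<psi> y = lorentz \<alpha> lam \<phi> y)"
proof -
  obtain D where D: "deriv_chain \<psi> D" and eq: "\<forall>y\<in>I11. (lam^2 - lam) * \<psi> y
        + (2*lam * of_real y + of_real (2 * sqrt (1+\<alpha>))) * D 1 y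
        + of_real (y^2 - 1) * D 2 y = 0"
    using assms unfolding solves_E2_def by blast
  define g where "g = gm \<alpha>"
  have gab: "\<bar>-g\<bar> < 1" using gm_abs by (simp add: g_def)
  have gab': "\<bar>g\<bar> < 1" using gm_abs by (simp add: g_def)
  define \<phi> where "\<phi> = (\<lambda>y. Pf \<alpha> (-lam) (mob (-g) y) * \<psi> (mob (-g) y))"
  have sub: "mob (-g) ` I11 \<subseteq> I11" using mob_maps[OF gab] by blast
  have smp: "Sm \<phi>" unfolding \<phi>_def
    by (rule Sm_mult[OF Sm_comp[OF Sm_mob[OF gab] sub Sm_Pf] Sm_comp[OF Sm_mob[OF gab] sub deriv_chain_Sm[OF D]]])
  then obtain F where F: "deriv_chain \<phi> F" using Sm_deriv_chain by blast
  note c = chain_d0[OF F]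
  have inv1: "mob (-g) (mob g y) = y" if "y \<in> I11" for y using mob_inv[OF gab' that] .
  have inv2: "mob g (mob (-g) y) = y" if "y \<in> I11" for y using mob_inv[OF gab that] by simp
  have L: "lorentz \<alpha> lam \<phi> y = \<psi> y" if y: "y \<in> I11" for y
  proof -
    have "lorentz \<alpha> lam \<phi> y = Pf \<alpha> lam y * Pf \<alpha> (-lam) y * \<psi> y"
      unfolding lorentz_eq \<phi>_def g_def[symmetric] inv1[OF y] by simp
    then show ?thesis using Pf_inv[OF y] by simp
  qed
  have E: "deriv_chain (lorentz \<alpha> lam \<phi>) D"
    using D L unfolding deriv_chain_def by auto
  have E1m: "(lam^2 + lam) * \<phi> (mob g y') + ((2*lam + 2) * of_real (mob g y') + of_real (2*\<alpha> / (sqrt (1+\<alpha>) + mob g y'))) * F 1 (mob g y')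
        + of_real ((mob g y')^2 - 1) * F 2 (mob g y') = 0" if y': "y' \<in> I11" for y'
  proof -
    note dm = derivs_match[OF E y' c(1) c(2)]
    have "0 = (lam^2 - lam) * lorentz \<alpha> lam \<phi> y' + (2*lam * of_real y' + of_real (2 * sqrt (1+\<alpha>))) * D 1 y'
        + of_real (y'^2 - 1) * D 2 y'"
      using eq y' L[OF y'] by simp
    also have "\<dots> = Pf \<alpha> lam y' * of_real (Y1f \<alpha> y') * ((lam^2 + lam) * \<phi> (mob g y') + ((2*lam + 2) * of_real (mob g y') + of_real (2*\<alpha> / (sqrt (1+\<alpha>) + mob g y'))) * F 1 (mob g y')
        + of_real ((mob g y')^2 - 1) * F 2 (mob g y'))"
      unfolding dm[THEN conjunct1] dm[THEN conjunct2] l_ident[OF y'] g_def ..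
    finally show ?thesis using Pf_nz[OF y'] Y1f_nz[OF y'] by simp
  qed
  have "solves_E1 \<alpha> lam \<phi>" unfolding solves_E1_def
  proof (intro exI[of _ F] conjI ballI)
    show "deriv_chain \<phi> F" by (rule F)
    fix y :: real assume y: "y \<in> I11"
    have y': "mob (-g) y \<in> I11" by (rule mob_maps[OF gab y])
    show "(lam^2 + lam) * \<phi> y + ((2*lam + 2) * of_real y + of_real (2*\<alpha> / (sqrt (1+\<alpha>) + y))) * F 1 y
        + of_real (y^2 - 1) * F 2 y = 0"
      using E1m[OF y'] unfolding inv2[OF y] .
  qed
  then show ?thesis using L by metis
qed

end


theorem mainTheorem4:
  fixes \<alpha> :: real and lam :: complex
  assumes "\<alpha> > 0"
  shows "((\<exists>\<phi>. solves_E1 \<alpha> lam \<phi> \<and> nontrivial_I11 \<phi>) \<longleftrightarrow>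
          (\<exists>\<psi>. solves_E2 \<alpha> lam \<psi> \<and> nontrivial_I11 \<psi>))
       \<and> (\<forall>\<phi>. solves_E1 \<alpha> lam \<phi> \<longrightarrow> solves_E2 \<alpha> lam (lorentz \<alpha> lam \<phi>))
       \<and> (\<forall>\<psi>. solves_E2 \<alpha> lam \<psi> \<longrightarrow>
            (\<exists>\<phi>. solves_E1 \<alpha> lam \<phi> \<and> (\<forall>y\<in>{-1..1}. \<psi> y = lorentz \<alpha> lam \<phi> y)))"
proof (intro conjI allI impI)
  have gab: "\<bar>gm \<alpha>\<bar> < 1" by (rule gm_abs[OF assms])
  have gab': "\<bar>-gm \<alpha>\<bar> < 1" using gab by simp
  show "(\<exists>\<phi>. solves_E1 \<alpha> lam \<phi> \<and> nontrivial_I11 \<phi>) \<longleftrightarrow>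
          (\<exists>\<psi>. solves_E2 \<alpha> lam \<psi> \<and> nontrivial_I11 \<psi>)"
  proof
    assume "\<exists>\<phi>. solves_E1 \<alpha> lam \<phi> \<and> nontrivial_I11 \<phi>"
    then obtain \<phi> x where s: "solves_E1 \<alpha> lam \<phi>" and x: "x \<in> I11" "\<phi> x \<noteq> 0"
      unfolding nontrivial_I11_def by blast
    have y: "mob (-gm \<alpha>) x \<in> I11" by (rule mob_maps[OF gab' x(1)])
    have "mob (gm \<alpha>) (mob (-gm \<alpha>) x) = x" using mob_inv[OF gab' x(1)] by simp
    then have "lorentz \<alpha> lam \<phi> (mob (-gm \<alpha>) x) = Pf \<alpha> lam (mob (-gm \<alpha>) x) * \<phi> x"
      by (simp add: lorentz_eq)
    then have "lorentz \<alpha> lam \<phi> (mob (-gm \<alpha>) x) \<noteq> 0" using Pf_nz[OF assms y] x(2) by simp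
    then show "\<exists>\<psi>. solves_E2 \<alpha> lam \<psi> \<and> nontrivial_I11 \<psi>"
      using forward[OF assms s] y unfolding nontrivial_I11_def by blast
  next
    assume "\<exists>\<psi>. solves_E2 \<alpha> lam \<psi> \<and> nontrivial_I11 \<psi>"
    then obtain \<psi> x where s: "solves_E2 \<alpha> lam \<psi>" and x: "x \<in> I11" "\<psi> x \<noteq> 0"
      unfolding nontrivial_I11_def by blast
    obtain \<phi> where p: "solves_E1 \<alpha> lam \<phi>" and L: "\<forall>y\<in>I11. \<psi> y = lorentz \<alpha> lam \<phi> y"
      using backward[OF assms s] by blast
    have "Pf \<alpha> lam x * \<phi> (mob (gm \<alpha>) x) \<noteq> 0" using L x by (simp add: lorentz_eq)
    then have "\<phi> (mob (gm \<alpha>) x) \<noteq> 0" by auto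
    moreover have "mob (gm \<alpha>) x \<in> I11" by (rule mob_maps[OF gab x(1)])
    ultimately show "\<exists>\<phi>. solves_E1 \<alpha> lam \<phi> \<and> nontrivial_I11 \<phi>"
      using p unfolding nontrivial_I11_def by blast
  qed
next
  fix \<phi> assume "solves_E1 \<alpha> lam \<phi>"
  then show "solves_E2 \<alpha> lam (lorentz \<alpha> lam \<phi>)" by (rule forward[OF assms])
next
  fix \<psi> assume "solves_E2 \<alpha> lam \<psi>"
  then show "\<exists>\<phi>. solves_E1 \<alpha> lam \<phi> \<and> (\<forall>y\<in>{-1..1}. \<psi> y = lorentz \<alpha> lam \<phi> y)"
    by (rule backward[OF assms])
qed

end
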